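(* Let $d:\mathbb{Z}\to\mathbb{C}$ be bounded and $(Ju)(n)=u(n-1)+d(n)u(n)+u(n+1)$ on $\ell^2(\mathbb{Z})$. Suppose there are $b_1\ne b_2$ in $\mathbb{R}$ such that $(\Im(d(n)))_{n\in\mathbb{Z}}$ alternates between $b_1$ and $b_2$, i.e. $\Im(d(n))=b_1$ for all even $n$ and $\Im(d(n))=b_2$ for all odd $n$. Then $J$ has no boundary eigenvalues.
   Context: The numerical range is $\operatorname{Num}(J)=\{\langle Ju,u\rangle:\|u\|=1\}$, and a boundary eigenvalue of $J$ is an eigenvalue of $J$ lying in the topological boundary of $\operatorname{Num}(J)$. *)

theory Defs
  imports "HOL-Analysis.Analysis"
begin

definition l2Z :: "(int \<Rightarrow> complex) set" where
  "l2Z = {u. (\<lambda>n. (cmod (u n))\<^sup>2) summable_on UNIV}"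

definition l2_inner :: "(int \<Rightarrow> complex) \<Rightarrow> (int \<Rightarrow> complex) \<Rightarrow> complex" where
  "l2_inner u v = (\<Sum>\<^sub>\<infinity> n. u n * cnj (v n))"

definition l2_norm :: "(int \<Rightarrow> complex) \<Rightarrow> real" where
  "l2_norm u = sqrt (\<Sum>\<^sub>\<infinity> n. (cmod (u n))\<^sup>2)"

definition jacobi_op :: "(int \<Rightarrow> complex) \<Rightarrow> (int \<Rightarrow> complex) \<Rightarrow> (int \<Rightarrow> complex)" where
  "jacobi_op d u = (\<lambda>n. u (n - 1) + d n * u n + u (n + 1))"

definition num_range :: "(int \<Rightarrow> complex) \<Rightarrow> complex set" where
  "num_range d = {l2_inner (jacobi_op d u) u | u. u \<in> l2Z \<and> l2_norm u = 1}"

definition is_eigenvalue :: "(int \<Rightarrow> complex) \<Rightarrow> complex \<Rightarrow> bool" where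
  "is_eigenvalue d mu \<longleftrightarrow> (\<exists>u \<in> l2Z. u \<noteq> (\<lambda>_. 0) \<and> jacobi_op d u = (\<lambda>n. mu * u n))"

definition is_boundary_eigenvalue :: "(int \<Rightarrow> complex) \<Rightarrow> complex \<Rightarrow> bool" where
  "is_boundary_eigenvalue d mu \<longleftrightarrow> is_eigenvalue d mu \<and> mu \<in> frontier (num_range d)"

end

theory Submission
  imports Defs
begin

lemma cmp_summable:
  fixes f :: "'a \<Rightarrow> complex"
  assumes "g summable_on A" "\<And>x. x \<in> A \<Longrightarrow> norm (f x) \<le> g x"
  shows "f summable_on A"
proof -
  have "(\<lambda>x. norm (f x)) summable_on A"
    by (rule Infinite_Sum.abs_summable_on_comparison_test'[OF assms])
  then show ?thesis by (simp add: abs_summable_summable)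
qed

lemma l2Z_iff: "x \<in> l2Z \<longleftrightarrow> (\<lambda>n. (cmod (x n))\<^sup>2) summable_on UNIV"
  by (simp add: l2Z_def)

lemma l2_add: assumes "x \<in> l2Z" "y \<in> l2Z" shows "(\<lambda>n. x n + y n) \<in> l2Z"
proof -
  have s: "(\<lambda>n. 2 * (cmod (x n))\<^sup>2 + 2 * (cmod (y n))\<^sup>2) summable_on UNIV"
    using assms by (intro summable_on_add summable_on_cmult_right) (auto simp: l2Z_iff)
  have "(cmod (x n + y n))\<^sup>2 \<le> 2 * (cmod (x n))\<^sup>2 + 2 * (cmod (y n))\<^sup>2" for n
  proof -
    have "cmod (x n + y n) \<le> cmod (x n) + cmod (y n)" by (rule norm_triangle_ineq)
    then have "(cmod (x n + y n))\<^sup>2 \<le> (cmod (x n) + cmod (y n))\<^sup>2"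
      by (simp add: power_mono)
    also have "\<dots> \<le> 2 * (cmod (x n))\<^sup>2 + 2 * (cmod (y n))\<^sup>2"
      using power2_diff[of "cmod (x n)" "cmod (y n)"] power2_sum[of "cmod (x n)" "cmod (y n)"]
        zero_le_power2[of "cmod (x n) - cmod (y n)"] by linarith
    finally show ?thesis .
  qed
  then show ?thesis unfolding l2Z_iff
    by (intro summable_on_comparison_test[OF s]) auto
qed

lemma l2_mult: assumes "x \<in> l2Z" "\<And>n. cmod (m n) \<le> B" shows "(\<lambda>n. m n * x n) \<in> l2Z"
proof -
  have s: "(\<lambda>n. B\<^sup>2 * (cmod (x n))\<^sup>2) summable_on UNIV"
    using assms by (intro summable_on_cmult_right) (auto simp: l2Z_iff)
  have "(cmod (m n * x n))\<^sup>2 \<le> B\<^sup>2 * (cmod (x n))\<^sup>2" for n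
    by (simp add: norm_mult power_mult_distrib mult_right_mono power_mono assms(2))
  then show ?thesis unfolding l2Z_iff
    by (intro summable_on_comparison_test[OF s]) auto
qed

lemma l2_scale: assumes "x \<in> l2Z" shows "(\<lambda>n. c * x n) \<in> l2Z"
  using l2_mult[OF assms, of "\<lambda>_. c" "cmod c"] by simp

lemma l2_shift: assumes "x \<in> l2Z" shows "(\<lambda>n. x (n + k)) \<in> l2Z"
proof -
  have "(\<lambda>n. (cmod (x n))\<^sup>2) summable_on UNIV \<longleftrightarrow> (\<lambda>n. (cmod (x (n + k)))\<^sup>2) summable_on UNIV"
    by (rule summable_on_reindex_bij_witness[where j="\<lambda>n. n - k" and i="\<lambda>n. n + k"]) auto
  then show ?thesis using assms by (simp add: l2Z_iff)
qed

lemma l2_shift': assumes "x \<in> l2Z" shows "(\<lambda>n. x (n - k)) \<in> l2Z"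
  using l2_shift[OF assms, of "-k"] by simp

lemma l2_jacobi: assumes "x \<in> l2Z" "\<And>n. cmod (d n) \<le> B" shows "jacobi_op d x \<in> l2Z"
  unfolding jacobi_op_def
  by (intro l2_add l2_mult[OF _ assms(2)] l2_shift l2_shift' assms(1))

lemma l2_prod: assumes "x \<in> l2Z" "y \<in> l2Z" shows "(\<lambda>n. x n * cnj (y n)) summable_on UNIV"
proof (rule cmp_summable)
  show "(\<lambda>n. (cmod (x n))\<^sup>2 + (cmod (y n))\<^sup>2) summable_on UNIV"
    using assms by (intro summable_on_add) (auto simp: l2Z_iff)
  fix n
  show "cmod (x n * cnj (y n)) \<le> (cmod (x n))\<^sup>2 + (cmod (y n))\<^sup>2"
  proof -
    have h1: "2 * cmod (x n) * cmod (y n) \<le> (cmod (x n))\<^sup>2 + (cmod (y n))\<^sup>2" by (rule sum_squares_bound)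
    have h2: "0 \<le> cmod (x n) * cmod (y n)" by simp
    show ?thesis unfolding norm_mult complex_mod_cnj using h1 h2 by linarith
  qed
qed

lemma inner_add_left: assumes "x \<in> l2Z" "y \<in> l2Z" "z \<in> l2Z"
  shows "l2_inner (\<lambda>n. x n + y n) z = l2_inner x z + l2_inner y z"
  unfolding l2_inner_def using l2_prod[OF assms(1,3)] l2_prod[OF assms(2,3)]
  by (simp add: distrib_right infsum_add)

lemma inner_scale_left: assumes "x \<in> l2Z" "z \<in> l2Z"
  shows "l2_inner (\<lambda>n. c * x n) z = c * l2_inner x z"
  unfolding l2_inner_def using l2_prod[OF assms]
  by (simp add: mult.assoc infsum_cmult_right)

lemma inner_cnj: "l2_inner y x = cnj (l2_inner x y)"
  unfolding l2_inner_def by (simp flip: infsum_cnj add: mult.commute)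

lemma inner_add_right: assumes "x \<in> l2Z" "y \<in> l2Z" "z \<in> l2Z"
  shows "l2_inner z (\<lambda>n. x n + y n) = l2_inner z x + l2_inner z y"
  by (metis inner_cnj inner_add_left[OF assms] complex_cnj_add)

lemma inner_scale_right: assumes "x \<in> l2Z" "z \<in> l2Z"
  shows "l2_inner z (\<lambda>n. c * x n) = cnj c * l2_inner z x"
  by (metis inner_cnj inner_scale_left[OF assms] complex_cnj_mult)

lemma summable_of_real_iff:
  "(\<lambda>x. complex_of_real (f x)) summable_on A \<longleftrightarrow> f summable_on A"
  using summable_on_Re[of "\<lambda>x. complex_of_real (f x)"] summable_on_of_real[of f]
  by auto

lemma infsum_of_real: "(\<Sum>\<^sub>\<infinity> x\<in>A. complex_of_real (f x)) = of_real (\<Sum>\<^sub>\<infinity> x\<in>A. f x)"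
  by (rule infsum_bounded_linear_strong[OF summable_of_real_iff bounded_linear_of_real])

lemma norm_sq: "(l2_norm x)\<^sup>2 = (\<Sum>\<^sub>\<infinity> n. (cmod (x n))\<^sup>2)"
  unfolding l2_norm_def by (simp add: infsum_nonneg)

lemma inner_self: "l2_inner x x = of_real ((l2_norm x)\<^sup>2)"
proof -
  have "l2_inner x x = (\<Sum>\<^sub>\<infinity> n. of_real ((cmod (x n))\<^sup>2))"
    unfolding l2_inner_def
    by (rule infsum_cong) (metis complex_norm_square of_real_power)
  also have "\<dots> = of_real (\<Sum>\<^sub>\<infinity> n. (cmod (x n))\<^sup>2)"
    by (rule infsum_of_real)
  finally show ?thesis by (simp add: norm_sq)
qed

lemma adjoint:
  assumes "x \<in> l2Z" "y \<in> l2Z" "\<And>n. cmod (d n) \<le> B"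
  shows "l2_inner (jacobi_op d x) y = l2_inner x (jacobi_op (\<lambda>n. cnj (d n)) y)"
proof -
  have dx: "(\<lambda>n. d n * x n) \<in> l2Z" by (rule l2_mult[OF assms(1,3)])
  have s1: "(\<lambda>n. x (n - 1) * cnj (y n)) summable_on UNIV"
    by (rule l2_prod[OF l2_shift'[OF assms(1)] assms(2)])
  have s2: "(\<lambda>n. d n * x n * cnj (y n)) summable_on UNIV"
    by (rule l2_prod[OF dx assms(2)])
  have s3: "(\<lambda>n. x (n + 1) * cnj (y n)) summable_on UNIV"
    by (rule l2_prod[OF l2_shift[OF assms(1)] assms(2)])
  have t1: "(\<lambda>n. x n * cnj (y (n - 1))) summable_on UNIV"
    by (rule l2_prod[OF assms(1) l2_shift'[OF assms(2)]])
  have t2: "(\<lambda>n. x n * cnj (cnj (d n) * y n)) summable_on UNIV"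
    using s2 by (simp add: mult_ac)
  have t3: "(\<lambda>n. x n * cnj (y (n + 1))) summable_on UNIV"
    by (rule l2_prod[OF assms(1) l2_shift[OF assms(2)]])
  have r1: "(\<Sum>\<^sub>\<infinity> n. x (n - 1) * cnj (y n)) = (\<Sum>\<^sub>\<infinity> n. x n * cnj (y (n + 1)))"
    by (rule infsum_reindex_bij_witness[where j="\<lambda>n. n - 1" and i="\<lambda>n. n + 1"]) auto
  have r3: "(\<Sum>\<^sub>\<infinity> n. x (n + 1) * cnj (y n)) = (\<Sum>\<^sub>\<infinity> n. x n * cnj (y (n - 1)))"
    by (rule infsum_reindex_bij_witness[where j="\<lambda>n. n + 1" and i="\<lambda>n. n - 1"]) auto
  have "l2_inner (jacobi_op d x) y =
     (\<Sum>\<^sub>\<infinity> n. x (n - 1) * cnj (y n)) + (\<Sum>\<^sub>\<infinity> n. d n * x n * cnj (y n)) + (\<Sum>\<^sub>\<infinity> n. x (n + 1) * cnj (y n))"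
    unfolding l2_inner_def jacobi_op_def
    by (simp add: distrib_right infsum_add s1 s2 s3 summable_on_add)
  also have "\<dots> = (\<Sum>\<^sub>\<infinity> n. x n * cnj (y (n - 1))) + (\<Sum>\<^sub>\<infinity> n. x n * cnj (cnj (d n) * y n)) + (\<Sum>\<^sub>\<infinity> n. x n * cnj (y (n + 1)))"
  proof -
    have m: "(\<lambda>n. d n * x n * cnj (y n)) = (\<lambda>n. x n * cnj (cnj (d n) * y n))"
      by (auto simp: mult_ac)
    show ?thesis by (simp only: r1 r3 m add.commute add.left_commute add.assoc)
  qed
  also have "\<dots> = l2_inner x (jacobi_op (\<lambda>n. cnj (d n)) y)"
    unfolding l2_inner_def jacobi_op_def
    by (simp only: complex_cnj_add distrib_left infsum_add t1 t2 t3 summable_on_add)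
  finally show ?thesis .
qed

lemma num_mem:
  assumes "x \<in> l2Z" "l2_norm x > 0" "\<And>n. cmod (d n) \<le> B"
  shows "l2_inner (jacobi_op d x) x / of_real ((l2_norm x)\<^sup>2) \<in> num_range d"
proof -
  define N where "N = l2_norm x"
  define y where "y = (\<lambda>n. of_real (1 / N) * x n)"
  have y: "y \<in> l2Z" unfolding y_def by (rule l2_scale[OF assms(1)])
  have "(l2_norm y)\<^sup>2 = (1/N)\<^sup>2 * (l2_norm x)\<^sup>2"
  proof -
    have "(l2_norm y)\<^sup>2 = (\<Sum>\<^sub>\<infinity> n. (1/N)\<^sup>2 * (cmod (x n))\<^sup>2)"
      unfolding norm_sq y_def
      by (rule infsum_cong) (simp add: norm_divide power_divide)
    also have "\<dots> = (1/N)\<^sup>2 * (l2_norm x)\<^sup>2"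
      unfolding norm_sq using assms(1) by (simp add: infsum_cmult_right l2Z_iff)
    finally show ?thesis .
  qed
  then have "(l2_norm y)\<^sup>2 = 1" using assms(2) by (simp add: N_def power_divide)
  moreover have "l2_norm y \<ge> 0" unfolding l2_norm_def by (simp add: infsum_nonneg)
  ultimately have n1: "l2_norm y = 1" using power2_eq_1_iff[of "l2_norm y"] by linarith
  define c where "c = complex_of_real (1/N)"
  have jx: "jacobi_op d x \<in> l2Z" by (rule l2_jacobi[OF assms(1,3)])
  have yc: "y = (\<lambda>n. c * x n)" unfolding y_def c_def ..
  have j: "jacobi_op d y = (\<lambda>n. c * jacobi_op d x n)"
    unfolding jacobi_op_def yc by (auto simp: algebra_simps)
  have "l2_inner (jacobi_op d y) y = c * (cnj c * l2_inner (jacobi_op d x) x)"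
    unfolding j using inner_scale_left[OF jx y, of c] inner_scale_right[OF assms(1) jx, of c]
    by (simp only: yc)
  also have "\<dots> = l2_inner (jacobi_op d x) x / of_real ((l2_norm x)\<^sup>2)"
    by (simp add: c_def N_def power2_eq_square field_simps)
  finally show ?thesis using y n1 unfolding num_range_def by force
qed

lemma solve_eps:
  fixes C a z :: complex and S W :: real
  assumes C: "C \<noteq> 0" and S: "S > 0" and W: "W \<ge> 0"
  defines "\<rho>0 \<equiv> cmod C / (2 * (cmod a + 1))"
  assumes z: "cmod z * (S + \<rho>0\<^sup>2 * W) \<le> \<rho>0 * cmod C / 2"
  shows "\<exists>\<epsilon>. \<epsilon> * C + of_real ((cmod \<epsilon>)\<^sup>2) * a = z * of_real (S + (cmod \<epsilon>)\<^sup>2 * W)"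
proof -
  define g where "g \<rho> = \<rho> * cmod C - cmod (z * of_real (S + \<rho>\<^sup>2 * W) - of_real (\<rho>\<^sup>2) * a)" for \<rho>
  have a1: "cmod a + 1 > 0" by (simp add: add_nonneg_pos)
  have r0: "\<rho>0 > 0" using C a1 unfolding \<rho>0_def by (intro divide_pos_pos) auto
  have g0: "g 0 \<le> 0" unfolding g_def by simp
  have ra: "\<rho>0 * cmod a \<le> cmod C / 2"
  proof -
    have "\<rho>0 * (cmod a + 1) = cmod C / 2" unfolding \<rho>0_def
      using a1 by (simp add: field_simps)
    then have "\<rho>0 * cmod a + \<rho>0 = cmod C / 2" by (simp add: distrib_left)
    then show ?thesis using r0 by linarith
  qed
  have "cmod (z * of_real (S + \<rho>0\<^sup>2 * W) - of_real (\<rho>0\<^sup>2) * a)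
        \<le> cmod (z * of_real (S + \<rho>0\<^sup>2 * W)) + cmod (of_real (\<rho>0\<^sup>2) * a)"
    by (rule norm_triangle_ineq4)
  also have "\<dots> = cmod z * (S + \<rho>0\<^sup>2 * W) + \<rho>0 * (\<rho>0 * cmod a)"
  proof -
    have nn: "S + \<rho>0\<^sup>2 * W \<ge> 0" using S W by simp
    have e1: "cmod (complex_of_real (S + \<rho>0\<^sup>2 * W)) = S + \<rho>0\<^sup>2 * W"
      using nn by (simp only: norm_of_real abs_of_nonneg)
    have e2: "cmod (complex_of_real (\<rho>0\<^sup>2)) = \<rho>0 * \<rho>0"
      unfolding norm_of_real power2_eq_square by simp
    show ?thesis by (simp only: norm_mult e1 e2 mult.assoc)
  qed
  also have "\<dots> \<le> \<rho>0 * cmod C / 2 + \<rho>0 * (cmod C / 2)"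
    using z ra r0 by (intro add_mono mult_left_mono) auto
  finally have g1: "0 \<le> g \<rho>0" unfolding g_def by simp
  have cont: "continuous_on {0..\<rho>0} g" unfolding g_def by (intro continuous_intros)
  obtain \<rho> where \<rho>: "0 \<le> \<rho>" "\<rho> \<le> \<rho>0" "g \<rho> = 0"
    using IVT'[of g 0 0 \<rho>0, OF g0 g1 _ cont] r0 by auto
  define N where "N = z * of_real (S + \<rho>\<^sup>2 * W) - of_real (\<rho>\<^sup>2) * a"
  define \<epsilon> where "\<epsilon> = N / C"
  have "cmod N = \<rho> * cmod C" using \<rho>(3) unfolding g_def N_def by simp
  then have ce: "cmod \<epsilon> = \<rho>" unfolding \<epsilon>_def using C by (simp add: norm_divide)
  have "\<epsilon> * C = N" unfolding \<epsilon>_def using C by simp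
  then show ?thesis using ce by (intro exI[of _ \<epsilon>]) (simp add: N_def)
qed

lemma single_le:
  fixes f :: "'a \<Rightarrow> real"
  assumes "f summable_on UNIV" "\<And>n. f n \<ge> 0"
  shows "f n \<le> (\<Sum>\<^sub>\<infinity> k. f k)"
proof -
  have "infsum f {n} \<le> infsum f UNIV"
    by (rule infsum_mono_neutral) (auto simp: assms)
  then show ?thesis by simp
qed

lemma parity_contra:
  fixes d u :: "int \<Rightarrow> complex" and b1 b2 :: real
  assumes u: "u \<in> l2Z" and n0: "u n0 \<noteq> 0"
    and J: "jacobi_op d u = (\<lambda>n. mu * u n)"
    and supp: "\<And>n. u n \<noteq> 0 \<Longrightarrow> Im (d n) = Im mu"
    and b: "b1 \<noteq> b2" "\<And>n. even n \<Longrightarrow> Im (d n) = b1" "\<And>n. odd n \<Longrightarrow> Im (d n) = b2"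
  shows False
proof -
  have other: "u k = 0" if "even k \<noteq> even n0" for k
  proof (rule ccontr)
    assume "u k \<noteq> 0"
    then have e: "Im (d k) = Im (d n0)" using supp n0 by simp
    show False
    proof (cases "even k")
      case True
      then have "odd n0" using that by simp
      have "b1 = b2" using e b(2)[OF True] b(3)[OF \<open>odd n0\<close>] by (metis)
      then show False using b(1) by blast
    next
      case False
      then have "even n0" using that by simp
      have "b1 = b2" using e b(3)[OF False] b(2)[OF \<open>even n0\<close>] by (metis)
      then show False using b(1) by blast
    qed
  qed
  have step: "u (k + 2) = - u k" if "even k = even n0" for k
  proof -
    have "jacobi_op d u (k + 1) = mu * u (k + 1)" using J by (simp add: fun_eq_iff)
    moreover have "even (k + 1) \<noteq> even n0" using that by simp
    then have z: "u (k + 1) = 0" by (rule other)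
    ultimately have "u (k + 1 - 1) + u (k + 1 + 1) = 0" unfolding jacobi_op_def by simp
    moreover have "k + 1 - 1 = k" "k + 1 + 1 = k + 2" by simp_all
    ultimately have "u k + u (k + 2) = 0" by simp
    then show ?thesis by (simp add: eq_neg_iff_add_eq_0 add.commute)
  qed
  have c: "cmod (u (n0 + 2 * int j)) = cmod (u n0)" for j
  proof (induction j)
    case 0 then show ?case by simp
  next
    case (Suc j)
    have "even (n0 + 2 * int j) = even n0" by simp
    then have "u (n0 + 2 * int j + 2) = - u (n0 + 2 * int j)" by (rule step)
    moreover have "n0 + 2 * int (Suc j) = n0 + 2 * int j + 2" by simp
    ultimately have "u (n0 + 2 * int (Suc j)) = - u (n0 + 2 * int j)" by (simp only:)
    then show ?case using Suc by simp
  qed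
  define g where "g j = (cmod (u (n0 + 2 * int j)))\<^sup>2" for j
  have "(\<lambda>n. (cmod (u n))\<^sup>2) summable_on range (\<lambda>j::nat. n0 + 2 * int j)"
    using u unfolding l2Z_iff by (rule summable_on_subset) auto
  then have "((\<lambda>n. (cmod (u n))\<^sup>2) \<circ> (\<lambda>j::nat. n0 + 2 * int j)) summable_on UNIV"
    by (subst (asm) summable_on_reindex) (auto simp: inj_on_def)
  then have "g summable_on UNIV" by (simp add: g_def[abs_def] o_def)
  then have "summable g" by (subst (asm) summable_on_UNIV_nonneg_real_iff) (auto simp: g_def)
  then have "g \<longlonglongrightarrow> 0" by (rule summable_LIMSEQ_zero)
  moreover have "g = (\<lambda>_. (cmod (u n0))\<^sup>2)" by (simp add: g_def c fun_eq_iff)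
  ultimately have "(cmod (u n0))\<^sup>2 = 0" by (simp add: LIMSEQ_const_iff)
  then show False using n0 by simp
qed

lemma real_wsum:
  fixes r :: "int \<Rightarrow> real"
  assumes "u \<in> l2Z" "\<And>n. \<bar>r n\<bar> \<le> R"
  shows "(\<lambda>n. r n * (cmod (u n))\<^sup>2) summable_on UNIV"
proof -
  have "(\<lambda>n. norm (r n * (cmod (u n))\<^sup>2)) summable_on UNIV"
  proof (rule Infinite_Sum.abs_summable_on_comparison_test')
    show "(\<lambda>n. R * (cmod (u n))\<^sup>2) summable_on UNIV"
      using assms(1) by (intro summable_on_cmult_right) (simp add: l2Z_iff)
    fix n
    have e: "norm (r n * (cmod (u n))\<^sup>2) = \<bar>r n\<bar> * (cmod (u n))\<^sup>2" by (simp add: abs_mult)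
    show "norm (r n * (cmod (u n))\<^sup>2) \<le> R * (cmod (u n))\<^sup>2"
      unfolding e by (rule mult_right_mono[OF assms(2)]) simp
  qed
  then show ?thesis using summable_on_iff_abs_summable_on_real by blast
qed

lemma cplx_wsum:
  fixes q :: "int \<Rightarrow> complex"
  assumes "u \<in> l2Z" "\<And>n. cmod (q n) \<le> Q"
  shows "(\<lambda>n. q n * of_real ((cmod (u n))\<^sup>2)) summable_on UNIV"
proof (rule cmp_summable)
  show "(\<lambda>n. Q * (cmod (u n))\<^sup>2) summable_on UNIV"
    using assms(1) by (intro summable_on_cmult_right) (simp add: l2Z_iff)
  fix n show "cmod (q n * of_real ((cmod (u n))\<^sup>2)) \<le> Q * (cmod (u n))\<^sup>2"
  proof -
    have e: "cmod (complex_of_real ((cmod (u n))\<^sup>2)) = (cmod (u n))\<^sup>2"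
      by (simp only: norm_of_real abs_of_nonneg zero_le_power2)
    show ?thesis unfolding norm_mult e by (rule mult_right_mono[OF assms(2)]) simp
  qed
qed

lemma cplx_wsum_Im:
  fixes q :: "int \<Rightarrow> complex"
  assumes "u \<in> l2Z" "\<And>n. cmod (q n) \<le> Q"
  shows "Im (\<Sum>\<^sub>\<infinity> n. q n * of_real ((cmod (u n))\<^sup>2)) = (\<Sum>\<^sub>\<infinity> n. Im (q n) * (cmod (u n))\<^sup>2)"
  using infsum_Im[OF cplx_wsum[OF assms]] by simp

lemma real_lin:
  fixes r s :: "int \<Rightarrow> real"
  assumes "u \<in> l2Z" "\<And>n. \<bar>r n\<bar> \<le> R" "\<And>n. \<bar>s n\<bar> \<le> R'"
  shows "(\<Sum>\<^sub>\<infinity> n. (a * r n + b * s n) * (cmod (u n))\<^sup>2)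
     = a * (\<Sum>\<^sub>\<infinity> n. r n * (cmod (u n))\<^sup>2) + b * (\<Sum>\<^sub>\<infinity> n. s n * (cmod (u n))\<^sup>2)"
proof -
  have 1: "(\<lambda>n. a * (r n * (cmod (u n))\<^sup>2)) summable_on UNIV"
    by (intro summable_on_cmult_right real_wsum[OF assms(1,2)])
  have 2: "(\<lambda>n. b * (s n * (cmod (u n))\<^sup>2)) summable_on UNIV"
    by (intro summable_on_cmult_right real_wsum[OF assms(1,3)])
  have 3: "(\<Sum>\<^sub>\<infinity> n. a * (r n * (cmod (u n))\<^sup>2)) = a * (\<Sum>\<^sub>\<infinity> n. r n * (cmod (u n))\<^sup>2)"
    by (rule infsum_cmult_right) (rule real_wsum[OF assms(1,2)])
  have 4: "(\<Sum>\<^sub>\<infinity> n. b * (s n * (cmod (u n))\<^sup>2)) = b * (\<Sum>\<^sub>\<infinity> n. s n * (cmod (u n))\<^sup>2)"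
    by (rule infsum_cmult_right) (rule real_wsum[OF assms(1,3)])
  have "(\<lambda>n. (a * r n + b * s n) * (cmod (u n))\<^sup>2)
      = (\<lambda>n. a * (r n * (cmod (u n))\<^sup>2) + b * (s n * (cmod (u n))\<^sup>2))"
    by (rule ext) (simp only: distrib_right mult.assoc)
  then have "(\<Sum>\<^sub>\<infinity> n. (a * r n + b * s n) * (cmod (u n))\<^sup>2)
      = (\<Sum>\<^sub>\<infinity> n. a * (r n * (cmod (u n))\<^sup>2) + b * (s n * (cmod (u n))\<^sup>2))"
    by (simp only:)
  also have "\<dots> = a * (\<Sum>\<^sub>\<infinity> n. r n * (cmod (u n))\<^sup>2) + b * (\<Sum>\<^sub>\<infinity> n. s n * (cmod (u n))\<^sup>2)"
    by (simp only: infsum_add[OF 1 2] 3 4)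
  finally show ?thesis .
qed

lemma pw: "v * cnj (q * v) = cnj q * complex_of_real ((cmod v)\<^sup>2)"
proof -
  have 1: "v * cnj (q * v) = cnj q * (v * cnj v)" by (simp add: mult_ac)
  have 2: "v * cnj v = complex_of_real ((cmod v)\<^sup>2)" by (metis complex_norm_square of_real_power)
  show ?thesis by (simp only: 1 2)
qed

theorem mainTheorem10:
  fixes d :: "int \<Rightarrow> complex" and b1 b2 :: real
  assumes "bounded (range d)"
    and "b1 \<noteq> b2"
    and "\<And>n. even n \<Longrightarrow> Im (d n) = b1"
    and "\<And>n. odd n \<Longrightarrow> Im (d n) = b2"
  shows "\<not> (\<exists>mu. is_boundary_eigenvalue d mu)"
proof
  assume "\<exists>mu. is_boundary_eigenvalue d mu"
  then obtain mu where ev: "is_eigenvalue d mu" and fr: "mu \<in> frontier (num_range d)"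
    unfolding is_boundary_eigenvalue_def by blast
  obtain u where u: "u \<in> l2Z" "u \<noteq> (\<lambda>_. 0)" and J: "jacobi_op d u = (\<lambda>n. mu * u n)"
    using ev unfolding is_eigenvalue_def by blast
  obtain B where B: "\<And>n. cmod (d n) \<le> B"
    using assms(1) unfolding bounded_iff by blast
  obtain n0 where n0: "u n0 \<noteq> 0" using u(2) by auto
  define \<beta> where "\<beta> n = Im mu - Im (d n)" for n
  define R where "R = \<bar>Im mu\<bar> + B"
  have \<beta>b: "\<bar>\<beta> n\<bar> \<le> R" for n
  proof -
    have "\<bar>Im (d n)\<bar> \<le> B" using abs_Im_le_cmod[of "d n"] B[of n] by linarith
    then show ?thesis unfolding \<beta>_def R_def by linarith
  qed
  have \<beta>b2: "\<bar>\<beta> n * \<beta> n\<bar> \<le> R * R" for n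
  proof -
    have "\<bar>\<beta> n * \<beta> n\<bar> = \<bar>\<beta> n\<bar> * \<bar>\<beta> n\<bar>" by (rule abs_mult)
    also have "\<dots> \<le> R * R" by (rule mult_mono[OF \<beta>b \<beta>b]) (use \<beta>b[of n] in auto)
    finally show ?thesis .
  qed
  define w where "w = (\<lambda>n. complex_of_real (\<beta> n) * u n)"
  have wl: "w \<in> l2Z" unfolding w_def
    by (rule l2_mult[OF u(1), of _ R]) (simp add: \<beta>b)
  have Jul: "jacobi_op d u \<in> l2Z" by (rule l2_jacobi[OF u(1) B])
  have Jwl: "jacobi_op d w \<in> l2Z" by (rule l2_jacobi[OF wl B])
  define S where "S = (l2_norm u)\<^sup>2"
  have Ssum: "S = (\<Sum>\<^sub>\<infinity> n. 1 * (cmod (u n))\<^sup>2)" unfolding S_def norm_sq by simp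
  have "(cmod (u n0))\<^sup>2 \<le> (\<Sum>\<^sub>\<infinity> n. (cmod (u n))\<^sup>2)"
    by (rule single_le) (use u(1) in \<open>auto simp: l2Z_iff\<close>)
  moreover have "(cmod (u n0))\<^sup>2 > 0" using n0 by simp
  ultimately have Spos: "S > 0" unfolding S_def norm_sq by linarith
  define m where "m n = mu - d n + cnj (d n)" for n
  have mb: "cmod (cnj (m n)) \<le> cmod mu + 2 * B" for n
  proof -
    have 1: "cmod (mu - d n + cnj (d n)) \<le> cmod (mu - d n) + cmod (cnj (d n))" by (rule norm_triangle_ineq)
    have 2: "cmod (mu - d n) \<le> cmod mu + cmod (d n)" by (rule norm_triangle_ineq4)
    have 3: "cmod (cnj (m n)) = cmod (mu - d n + cnj (d n))" unfolding m_def complex_mod_cnj ..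
    show ?thesis using 1 2 3 B[of n] unfolding complex_mod_cnj by linarith
  qed
  have Jstar: "jacobi_op (\<lambda>n. cnj (d n)) u = (\<lambda>n. m n * u n)"
  proof
    fix n
    have h: "u (n - 1) + d n * u n + u (n + 1) = mu * u n"
      using J unfolding jacobi_op_def by (simp add: fun_eq_iff)
    have "m n * u n = mu * u n - d n * u n + cnj (d n) * u n" by (simp add: m_def algebra_simps)
    also have "\<dots> = (u (n - 1) + d n * u n + u (n + 1)) - d n * u n + cnj (d n) * u n"
      by (simp only: h)
    also have "\<dots> = jacobi_op (\<lambda>n. cnj (d n)) u n" unfolding jacobi_op_def by (simp add: algebra_simps)
    finally show "jacobi_op (\<lambda>n. cnj (d n)) u n = m n * u n" ..
  qed
  have sq: "v * cnj v = complex_of_real ((cmod v)\<^sup>2)" for v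
    by (metis complex_norm_square of_real_power)
  have I1: "l2_inner (jacobi_op d u) u = mu * of_real S"
    unfolding J S_def using inner_scale_left[OF u(1) u(1), of mu] inner_self[of u] by simp
  have I2: "l2_inner (jacobi_op d u) u = (\<Sum>\<^sub>\<infinity> n. cnj (m n) * of_real ((cmod (u n))\<^sup>2))"
  proof -
    have "l2_inner (jacobi_op d u) u = l2_inner u (\<lambda>n. m n * u n)"
      using adjoint[OF u(1) u(1) B] Jstar by simp
    also have "\<dots> = (\<Sum>\<^sub>\<infinity> n. cnj (m n) * of_real ((cmod (u n))\<^sup>2))"
      unfolding l2_inner_def
      by (rule infsum_cong) (rule pw)
    finally show ?thesis .
  qed
  have ImM: "Im (cnj (m n)) = Im mu * 1 + (-2) * \<beta> n" for n
    unfolding m_def \<beta>_def by simp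
  have "Im mu * S = Im (\<Sum>\<^sub>\<infinity> n. cnj (m n) * of_real ((cmod (u n))\<^sup>2))"
    using I1 I2 by simp
  also have "\<dots> = (\<Sum>\<^sub>\<infinity> n. (Im mu * 1 + (-2) * \<beta> n) * (cmod (u n))\<^sup>2)"
    unfolding cplx_wsum_Im[OF u(1) mb] ImM ..
  also have "\<dots> = Im mu * S + (-2) * (\<Sum>\<^sub>\<infinity> n. \<beta> n * (cmod (u n))\<^sup>2)"
    unfolding Ssum by (rule real_lin[OF u(1), of _ 1 _ R]) (simp_all add: \<beta>b)
  finally have T1: "(\<Sum>\<^sub>\<infinity> n. \<beta> n * (cmod (u n))\<^sup>2) = 0" by simp
  have I3: "l2_inner u w = 0"
  proof -
    have "l2_inner u w = (\<Sum>\<^sub>\<infinity> n. complex_of_real (\<beta> n * (cmod (u n))\<^sup>2))"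
      unfolding l2_inner_def w_def
      by (rule infsum_cong) (simp only: pw complex_cnj_complex_of_real of_real_mult)
    also have "\<dots> = 0" by (simp only: infsum_of_real T1) simp
    finally show ?thesis .
  qed
  have I4: "l2_inner w u = 0" using I3 inner_cnj[of w u] by simp
  define C where "C = l2_inner (jacobi_op d w) u"
  have "C = l2_inner w (\<lambda>n. m n * u n)"
    unfolding C_def using adjoint[OF wl u(1) B] Jstar by simp
  also have "\<dots> = (\<Sum>\<^sub>\<infinity> n. (of_real (\<beta> n) * cnj (m n)) * of_real ((cmod (u n))\<^sup>2))"
    unfolding l2_inner_def w_def
    by (rule infsum_cong) (simp only: mult.assoc pw)
  finally have Ceq: "C = (\<Sum>\<^sub>\<infinity> n. (of_real (\<beta> n) * cnj (m n)) * of_real ((cmod (u n))\<^sup>2))" .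
  have qb: "cmod (of_real (\<beta> n) * cnj (m n)) \<le> R * (cmod mu + 2 * B)" for n
    unfolding norm_mult using \<beta>b[of n] mb[of n] by (simp add: mult_mono)
  have ImQ: "Im (of_real (\<beta> n) * cnj (m n)) = Im mu * \<beta> n + (-2) * (\<beta> n * \<beta> n)" for n
    unfolding m_def \<beta>_def by (simp add: algebra_simps)
  define T2 where "T2 = (\<Sum>\<^sub>\<infinity> n. (\<beta> n * \<beta> n) * (cmod (u n))\<^sup>2)"
  have "Im C = (\<Sum>\<^sub>\<infinity> n. (Im mu * \<beta> n + (-2) * (\<beta> n * \<beta> n)) * (cmod (u n))\<^sup>2)"
    unfolding Ceq cplx_wsum_Im[OF u(1) qb] ImQ ..
  also have "\<dots> = Im mu * (\<Sum>\<^sub>\<infinity> n. \<beta> n * (cmod (u n))\<^sup>2) + (-2) * T2"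
    unfolding T2_def by (rule real_lin[OF u(1) \<beta>b \<beta>b2])
  finally have ImC: "Im C = -2 * T2" using T1 by simp
  have T2pos: "T2 > 0"
  proof (rule ccontr)
    assume "\<not> T2 > 0"
    then have le: "T2 \<le> 0" by simp
    have "u n \<noteq> 0 \<Longrightarrow> Im (d n) = Im mu" for n
    proof -
      assume un: "u n \<noteq> 0"
      have "(\<beta> n * \<beta> n) * (cmod (u n))\<^sup>2 \<le> T2"
        unfolding T2_def
        by (rule single_le[OF real_wsum[OF u(1) \<beta>b2]]) simp
      then have "(\<beta> n * \<beta> n) * (cmod (u n))\<^sup>2 \<le> 0" using le by simp
      moreover have "(cmod (u n))\<^sup>2 > 0" using un by simp
      ultimately have "\<beta> n * \<beta> n \<le> 0" by (simp add: mult_le_0_iff)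
      then have "\<beta> n = 0" by (auto simp: mult_le_0_iff)
      then show "Im (d n) = Im mu" unfolding \<beta>_def by simp
    qed
    then show False using parity_contra[OF u(1) n0 J _ assms(2-4)] by blast
  qed
  have Cnz: "C \<noteq> 0" using ImC T2pos by auto
  define W where "W = (l2_norm w)\<^sup>2"
  have W0: "W \<ge> 0" unfolding W_def by simp
  define D where "D = l2_inner (jacobi_op d w) w"
  have expand: "l2_inner (jacobi_op d (\<lambda>n. u n + \<epsilon> * w n)) (\<lambda>n. u n + \<epsilon> * w n)
       = mu * of_real S + \<epsilon> * C + of_real ((cmod \<epsilon>)\<^sup>2) * D"
    and expandN: "(l2_norm (\<lambda>n. u n + \<epsilon> * w n))\<^sup>2 = S + (cmod \<epsilon>)\<^sup>2 * W"
    and xl: "(\<lambda>n. u n + \<epsilon> * w n) \<in> l2Z" for \<epsilon>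
  proof -
    have ew: "(\<lambda>n. \<epsilon> * w n) \<in> l2Z" by (rule l2_scale[OF wl])
    show xl: "(\<lambda>n. u n + \<epsilon> * w n) \<in> l2Z" by (rule l2_add[OF u(1) ew])
    have eJw: "(\<lambda>n. \<epsilon> * jacobi_op d w n) \<in> l2Z" by (rule l2_scale[OF Jwl])
    have Jx: "jacobi_op d (\<lambda>n. u n + \<epsilon> * w n) = (\<lambda>n. jacobi_op d u n + \<epsilon> * jacobi_op d w n)"
      unfolding jacobi_op_def by (auto simp: algebra_simps)
    have ee: "\<epsilon> * cnj \<epsilon> = complex_of_real ((cmod \<epsilon>)\<^sup>2)" by (rule sq)
    have Juw: "l2_inner (jacobi_op d u) w = 0"
      unfolding J using inner_scale_left[OF u(1) wl, of mu] I3 by simp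
    have a1: "l2_inner (jacobi_op d u) (\<lambda>n. u n + \<epsilon> * w n) = mu * of_real S"
      using inner_add_right[OF u(1) ew Jul] inner_scale_right[OF wl Jul, of \<epsilon>] Juw I1 by simp
    have a2: "l2_inner (jacobi_op d w) (\<lambda>n. u n + \<epsilon> * w n) = C + cnj \<epsilon> * D"
      using inner_add_right[OF u(1) ew Jwl] inner_scale_right[OF wl Jwl, of \<epsilon>]
      unfolding C_def D_def by simp
    show "l2_inner (jacobi_op d (\<lambda>n. u n + \<epsilon> * w n)) (\<lambda>n. u n + \<epsilon> * w n)
       = mu * of_real S + \<epsilon> * C + of_real ((cmod \<epsilon>)\<^sup>2) * D"
      unfolding Jx inner_add_left[OF Jul eJw xl] inner_scale_left[OF Jwl xl] a1 a2
      by (simp add: ee[symmetric] algebra_simps) (rule disjI2, metis complex_norm_square of_real_power)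
    have b1: "l2_inner u (\<lambda>n. u n + \<epsilon> * w n) = of_real S"
      using inner_add_right[OF u(1) ew u(1)] inner_scale_right[OF wl u(1), of \<epsilon>] I3 inner_self[of u]
      unfolding S_def by simp
    have b2: "l2_inner w (\<lambda>n. u n + \<epsilon> * w n) = cnj \<epsilon> * of_real W"
      using inner_add_right[OF u(1) ew wl] inner_scale_right[OF wl wl, of \<epsilon>] I4 inner_self[of w]
      unfolding W_def by simp
    have "complex_of_real ((l2_norm (\<lambda>n. u n + \<epsilon> * w n))\<^sup>2) = l2_inner (\<lambda>n. u n + \<epsilon> * w n) (\<lambda>n. u n + \<epsilon> * w n)"
      by (rule inner_self[symmetric])
    also have "\<dots> = of_real S + \<epsilon> * (cnj \<epsilon> * of_real W)"
      unfolding inner_add_left[OF u(1) ew xl] inner_scale_left[OF wl xl] b1 b2 ..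
    also have "\<dots> = complex_of_real (S + (cmod \<epsilon>)\<^sup>2 * W)"
      by (simp add: mult.assoc[symmetric] ee)
    finally show "(l2_norm (\<lambda>n. u n + \<epsilon> * w n))\<^sup>2 = S + (cmod \<epsilon>)\<^sup>2 * W"
      by (simp only: of_real_eq_iff)
  qed
  define a where "a = D - mu * of_real W"
  define \<rho>0 where "\<rho>0 = cmod C / (2 * (cmod a + 1))"
  have SW: "S + \<rho>0\<^sup>2 * W > 0" using Spos W0 by (simp add: add_pos_nonneg)
  have r0: "\<rho>0 > 0" unfolding \<rho>0_def using Cnz
    by (intro divide_pos_pos) (auto simp: add_nonneg_pos)
  define \<delta> where "\<delta> = \<rho>0 * cmod C / 2 / (S + \<rho>0\<^sup>2 * W)"
  have \<delta>pos: "\<delta> > 0" unfolding \<delta>_def using r0 Cnz SW by simp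
  have "ball mu \<delta> \<subseteq> num_range d"
  proof
    fix y assume "y \<in> ball mu \<delta>"
    then have zy: "cmod (y - mu) < \<delta>" by (simp add: dist_norm norm_minus_commute)
    define z where "z = y - mu"
    have "cmod z * (S + \<rho>0\<^sup>2 * W) \<le> \<rho>0 * cmod C / 2"
      using zy SW unfolding z_def \<delta>_def by (simp add: pos_less_divide_eq algebra_simps)
    then obtain \<epsilon> where eps: "\<epsilon> * C + of_real ((cmod \<epsilon>)\<^sup>2) * a = z * of_real (S + (cmod \<epsilon>)\<^sup>2 * W)"
      using solve_eps[OF Cnz Spos W0, of z a] unfolding \<rho>0_def by blast
    define x where "x = (\<lambda>n. u n + \<epsilon> * w n)"
    have NS: "S + (cmod \<epsilon>)\<^sup>2 * W > 0" using Spos W0 by (simp add: add_pos_nonneg)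
    have nx: "(l2_norm x)\<^sup>2 = S + (cmod \<epsilon>)\<^sup>2 * W" unfolding x_def by (rule expandN)
    have "l2_norm x \<ge> 0" unfolding l2_norm_def by (simp add: infsum_nonneg)
    moreover have "l2_norm x \<noteq> 0" using nx NS by auto
    ultimately have npos: "l2_norm x > 0" by linarith
    have "l2_inner (jacobi_op d x) x = mu * of_real S + \<epsilon> * C + of_real ((cmod \<epsilon>)\<^sup>2) * D"
      unfolding x_def by (rule expand)
    also have "\<dots> = (mu + z) * of_real (S + (cmod \<epsilon>)\<^sup>2 * W)"
      using eps unfolding a_def by (simp add: algebra_simps)
    finally have eq: "l2_inner (jacobi_op d x) x = (mu + z) * of_real (S + (cmod \<epsilon>)\<^sup>2 * W)" .
    have nz: "complex_of_real (S + (cmod \<epsilon>)\<^sup>2 * W) \<noteq> 0" using NS by (simp only: of_real_eq_0_iff)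
    have "l2_inner (jacobi_op d x) x / of_real ((l2_norm x)\<^sup>2) = mu + z"
      unfolding nx eq using nz by (rule nonzero_mult_div_cancel_right)
    moreover have "l2_inner (jacobi_op d x) x / of_real ((l2_norm x)\<^sup>2) \<in> num_range d"
      by (rule num_mem[OF _ npos B]) (simp add: x_def xl)
    ultimately show "y \<in> num_range d" unfolding z_def by simp
  qed
  then have "mu \<in> interior (num_range d)" using \<delta>pos by (auto simp: mem_interior)
  then show False using fr by (simp add: frontier_def)
qed

end
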